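(* Let $C=(X,\xi)$ be a finite $T$-coalgebra. For every $x\in X$ there exists a closed and guarded expression $\phi\in\mathcal{E}_0$ such that $x\in[\![\phi]\!]_C$.
   Context: Standing assumptions: $T:\mathbf{Set}\to\mathbf{Set}$ is a functor; $\mathcal{L}$ is a set of modalities with arities ($L/n$), each $L/n$ assigned an $n$-ary monotone singleton-preserving predicate lifting $[\![L]\!]$ for $T$ such that $\Lambda=\{[\![L]\!]\mid L\in\mathcal{L}\}$ is strongly expressive. (An $n$-ary predicate lifting is a family $\lambda_X:(\mathcal{P}X)^n\to\mathcal{P}(TX)$ with $\lambda_X(f^{-1}[A_1],\dots,f^{-1}[A_n])=(Tf)^{-1}[\lambda_Y(A_1,\dots,A_n)]$ for $f:X\to Y$; monotone if monotone in each argument; singleton-preserving if $|\lambda_X(\{x_1\},\dots,\{x_n\})|=1$ for all $x_i\in X$; $\Lambda$ strongly expressive if for every set $X$ and $t\in TX$ there are $\lambda/n\in\Lambda$, $x_i\in X$ with $\{t\}=\lambda_X(\{x_1\},\dots,\{x_n\})$.) Fix a set $V$ of variables. Expressions $\mathcal{E}$: $\phi::=z\mid\nu z.\,\phi\mid L(\phi_1,\dots,\phi_n)$. Closed: every variable occurrence bound by a $\nu$. Guarded: every variable occurrence is separated from its binding $\nu$ by at least one modality. $\mathcal{E}_0$ is the set of closed guarded expressions. Semantics in a coalgebra $C=(X,\xi)$ under valuation $\kappa:V\to\mathcal{P}X$: $[\![z]\!]^\kappa=\kappa(z)$; $[\![L(\phi_1,\dots,\phi_n)]\!]^\kappa=\xi^{-1}[[\![L]\!]_X([\![\phi_1]\!]^\kappa,\dots,[\![\phi_n]\!]^\kappa)]$;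 $[\![\nu z.\phi]\!]^\kappa=$ greatest fixed point of $Y\mapsto[\![\phi]\!]^{\kappa[z\mapsto Y]}$; for closed $\phi$ write $[\![\phi]\!]_C$. *)

theory Defs
  imports Main
begin

text \<open>
  Set functors are represented relative to a universe type 'u: objects are subsets
  X of 'u, the functor sends X to a set T X of elements of a type 't, and for a map
  f from X to Y (a HOL function f with f ` X within Y) the action is Tm X Y f.
\<close>

definition set_functor ::
  "('u set \<Rightarrow> 't set) \<Rightarrow> ('u set \<Rightarrow> 'u set \<Rightarrow> ('u \<Rightarrow> 'u) \<Rightarrow> 't \<Rightarrow> 't) \<Rightarrow> bool" where
  "set_functor T Tm \<longleftrightarrow>
     (\<forall>X Y f t. f ` X \<subseteq> Y \<and> t \<in> T X \<longrightarrow> Tm X Y f t \<in> T Y) \<and>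
     (\<forall>X Y f g t. (\<forall>x\<in>X. f x = g x) \<and> t \<in> T X \<longrightarrow> Tm X Y f t = Tm X Y g t) \<and>
     (\<forall>X t. t \<in> T X \<longrightarrow> Tm X X id t = t) \<and>
     (\<forall>X Y Z f g t. f ` X \<subseteq> Y \<and> g ` Y \<subseteq> Z \<and> t \<in> T X \<longrightarrow>
        Tm X Z (g \<circ> f) t = Tm Y Z g (Tm X Y f t))"

definition pred_lifting ::
  "('u set \<Rightarrow> 't set) \<Rightarrow> ('u set \<Rightarrow> 'u set \<Rightarrow> ('u \<Rightarrow> 'u) \<Rightarrow> 't \<Rightarrow> 't) \<Rightarrow> nat
    \<Rightarrow> ('u set \<Rightarrow> 'u set list \<Rightarrow> 't set) \<Rightarrow> bool" where
  "pred_lifting T Tm n lam \<longleftrightarrow>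
     (\<forall>X As. length As = n \<and> (\<forall>A\<in>set As. A \<subseteq> X) \<longrightarrow> lam X As \<subseteq> T X) \<and>
     (\<forall>X Y f As. f ` X \<subseteq> Y \<and> length As = n \<and> (\<forall>A\<in>set As. A \<subseteq> Y) \<longrightarrow>
        lam X (map (\<lambda>A. X \<inter> f -` A) As) = {t \<in> T X. Tm X Y f t \<in> lam Y As})"

definition monotone_lifting :: "nat \<Rightarrow> ('u set \<Rightarrow> 'u set list \<Rightarrow> 't set) \<Rightarrow> bool" where
  "monotone_lifting n lam \<longleftrightarrow>
     (\<forall>X As Bs. length As = n \<and> length Bs = n \<and> (\<forall>B\<in>set Bs. B \<subseteq> X) \<and>
        (\<forall>i<n. As ! i \<subseteq> Bs ! i) \<longrightarrow> lam X As \<subseteq> lam X Bs)"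

definition singleton_preserving :: "nat \<Rightarrow> ('u set \<Rightarrow> 'u set list \<Rightarrow> 't set) \<Rightarrow> bool" where
  "singleton_preserving n lam \<longleftrightarrow>
     (\<forall>X xs. length xs = n \<and> set xs \<subseteq> X \<longrightarrow> card (lam X (map (\<lambda>x. {x}) xs)) = 1)"

definition strongly_expressive ::
  "('u set \<Rightarrow> 't set) \<Rightarrow> ('l \<Rightarrow> nat) \<Rightarrow> ('l \<Rightarrow> 'u set \<Rightarrow> 'u set list \<Rightarrow> 't set) \<Rightarrow> bool" where
  "strongly_expressive T ar lift \<longleftrightarrow>
     (\<forall>X t. t \<in> T X \<longrightarrow>
        (\<exists>L xs. length xs = ar L \<and> set xs \<subseteq> X \<and> {t} = lift L X (map (\<lambda>x. {x}) xs)))"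

datatype ('l, 'v) expr = Var 'v | Nu 'v "('l, 'v) expr" | Mod 'l "('l, 'v) expr list"

fun fv :: "('l, 'v) expr \<Rightarrow> 'v set" where
  "fv (Var z) = {z}"
| "fv (Nu z e) = fv e - {z}"
| "fv (Mod L es) = (\<Union>e\<in>set es. fv e)"

fun unguarded_fv :: "('l, 'v) expr \<Rightarrow> 'v set" where
  "unguarded_fv (Var z) = {z}"
| "unguarded_fv (Nu z e) = unguarded_fv e - {z}"
| "unguarded_fv (Mod L es) = {}"

fun guarded :: "('l, 'v) expr \<Rightarrow> bool" where
  "guarded (Var z) = True"
| "guarded (Nu z e) = (z \<notin> unguarded_fv e \<and> guarded e)"
| "guarded (Mod L es) = (\<forall>e\<in>set es. guarded e)"

fun well_arity :: "('l \<Rightarrow> nat) \<Rightarrow> ('l, 'v) expr \<Rightarrow> bool" where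
  "well_arity ar (Var z) = True"
| "well_arity ar (Nu z e) = well_arity ar e"
| "well_arity ar (Mod L es) = (length es = ar L \<and> (\<forall>e\<in>set es. well_arity ar e))"

definition closed :: "('l, 'v) expr \<Rightarrow> bool" where
  "closed e \<longleftrightarrow> fv e = {}"

fun sem :: "('l \<Rightarrow> 'u set \<Rightarrow> 'u set list \<Rightarrow> 't set) \<Rightarrow> 'u set \<Rightarrow> ('u \<Rightarrow> 't)
             \<Rightarrow> ('v \<Rightarrow> 'u set) \<Rightarrow> ('l, 'v) expr \<Rightarrow> 'u set" where
  "sem lift X xi \<kappa> (Var z) = \<kappa> z"
| "sem lift X xi \<kappa> (Mod L es) = {x \<in> X. xi x \<in> lift L X (map (sem lift X xi \<kappa>) es)}"
| "sem lift X xi \<kappa> (Nu z e) = gfp (\<lambda>Y. X \<inter> sem lift X xi (\<kappa>(z := X \<inter> Y)) e)"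

end

theory Submission
  imports Defs
begin

function phi :: "'u set \<Rightarrow> ('u \<Rightarrow> 'v) \<Rightarrow> ('u \<Rightarrow> 'l) \<Rightarrow> ('u \<Rightarrow> 'u list) \<Rightarrow> 'u set \<Rightarrow> 'u \<Rightarrow> ('l, 'v) expr" where
  "phi X z Lf xsf S y = (if y \<in> S \<or> \<not> finite X \<or> y \<notin> X then Var (z y)
     else Nu (z y) (Mod (Lf y) (map (phi X z Lf xsf (insert y S)) (xsf y))))"
  by pat_completeness auto
termination
  apply (relation "measure (\<lambda>(X, z, Lf, xsf, S, y). card (X - S))")
   apply simp
  apply clarsimp
  apply (subgoal_tac "card (X - S) > 0")
   apply simp
  apply (auto simp: card_gt_0_iff)
  done

declare phi.simps[simp del]

lemma phi_syn:
  shows "finite X \<Longrightarrow> (\<forall>y\<in>X. set (xsf y) \<subseteq> X \<and> length (xsf y) = ar (Lf y)) \<Longrightarrow>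
     y \<in> X \<Longrightarrow> well_arity ar (phi X z Lf xsf S y) \<and> fv (phi X z Lf xsf S y) \<subseteq> z ` S
     \<and> unguarded_fv (phi X z Lf xsf S y) \<subseteq> z ` S \<and> guarded (phi X z Lf xsf S y)"
proof (induction X z Lf xsf S y rule: phi.induct)
  case (1 X z Lf xsf S y)
  show ?case
  proof (cases "y \<in> S")
    case True
    then show ?thesis by (simp add: phi.simps[of X z Lf xsf S y])
  next
    case False
    have IH: "\<And>x. x \<in> set (xsf y) \<Longrightarrow> well_arity ar (phi X z Lf xsf (insert y S) x) \<and> fv (phi X z Lf xsf (insert y S) x) \<subseteq> z ` (insert y S)
     \<and> guarded (phi X z Lf xsf (insert y S) x)"
    proof -
      fix x assume x: "x \<in> set (xsf y)"
      hence "x \<in> X" using 1(3,4) by blast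
      thus "well_arity ar (phi X z Lf xsf (insert y S) x) \<and> fv (phi X z Lf xsf (insert y S) x) \<subseteq> z ` (insert y S)
     \<and> guarded (phi X z Lf xsf (insert y S) x)" using 1(1)[OF _ x] False 1(2,3,4) by blast
    qed
    show ?thesis using False 1(2,3,4) IH
      by (auto simp add: phi.simps[of X z Lf xsf S y])
  qed
qed

lemma sem_subset:
  assumes "\<forall>v. \<kappa> v \<subseteq> X"
  shows "sem lift X xi \<kappa> e \<subseteq> X"
proof (cases e)
  case (Nu z e')
  have "gfp (\<lambda>Y. X \<inter> sem lift X xi (\<kappa>(z := X \<inter> Y)) e') \<subseteq> X"
    unfolding gfp_def by (rule Sup_least) auto
  then show ?thesis using Nu by simp
qed (use assms in auto)

lemma phi_sem:
  shows "finite X \<Longrightarrow> inj_on z X \<Longrightarrow>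
    (\<forall>y\<in>X. set (xsf y) \<subseteq> X \<and> length (xsf y) = ar (Lf y) \<and> monotone_lifting (ar (Lf y)) (lift (Lf y))
                 \<and> {xi y} = lift (Lf y) X (map (\<lambda>x. {x}) (xsf y))) \<Longrightarrow>
    y \<in> X \<Longrightarrow> S \<subseteq> X \<Longrightarrow> (\<forall>v. \<kappa> v \<subseteq> X) \<Longrightarrow> (\<forall>s\<in>S. s \<in> \<kappa> (z s)) \<Longrightarrow>
     y \<in> sem lift X xi \<kappa> (phi X z Lf xsf S y)"
proof (induction X z Lf xsf S y arbitrary: \<kappa> rule: phi.induct)
  case (1 X z Lf xsf S y)
  have hyp: "\<forall>y\<in>X. set (xsf y) \<subseteq> X \<and> length (xsf y) = ar (Lf y) \<and> monotone_lifting (ar (Lf y)) (lift (Lf y))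
                 \<and> {xi y} = lift (Lf y) X (map (\<lambda>x. {x}) (xsf y))" by (rule 1(4))
  show ?case
  proof (cases "y \<in> S")
    case True
    then show ?thesis using 1(8) by (simp add: phi.simps[of X z Lf xsf S y])
  next
    case False
    define \<kappa>' where "\<kappa>' = \<kappa>(z y := X \<inter> {y})"
    have k1: "\<forall>v. \<kappa>' v \<subseteq> X" using 1(7) unfolding \<kappa>'_def by auto
    have k2: "\<forall>s\<in>insert y S. s \<in> \<kappa>' (z s)"
    proof
      fix s assume s: "s \<in> insert y S"
      show "s \<in> \<kappa>' (z s)"
      proof (cases "s = y")
        case True then show ?thesis using 1(5) unfolding \<kappa>'_def by auto
      next
        case False
        hence "z s \<noteq> z y" using s 1(3,5,6) unfolding inj_on_def by blast
        then show ?thesis using False s 1(8) unfolding \<kappa>'_def by auto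
      qed
    qed
    have IH: "\<And>x. x \<in> set (xsf y) \<Longrightarrow> x \<in> sem lift X xi \<kappa>' (phi X z Lf xsf (insert y S) x)"
      using 1(1)[OF _ _ 1(2,3,4) _ _ k1 k2] False 1(2,5,6) hyp by blast
    let ?As = "map (\<lambda>x. {x}) (xsf y)"
    let ?Bs = "map (sem lift X xi \<kappa>') (map (phi X z Lf xsf (insert y S)) (xsf y))"
    have "lift (Lf y) X ?As \<subseteq> lift (Lf y) X ?Bs"
    proof -
      have m: "monotone_lifting (ar (Lf y)) (lift (Lf y))" and l: "length (xsf y) = ar (Lf y)"
        using hyp 1(5) by auto
      have "\<forall>i<ar (Lf y). ?As ! i \<subseteq> ?Bs ! i" using IH l by (auto simp: nth_mem)
      moreover have "\<forall>B\<in>set ?Bs. B \<subseteq> X" using sem_subset[OF k1] by auto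
      ultimately show ?thesis using m l unfolding monotone_lifting_def by simp
    qed
    hence "xi y \<in> lift (Lf y) X ?Bs" using hyp 1(5) by auto
    hence "{y} \<subseteq> (\<lambda>Y. X \<inter> sem lift X xi (\<kappa>(z y := X \<inter> Y)) (Mod (Lf y) (map (phi X z Lf xsf (insert y S)) (xsf y)))) {y}"
      using 1(5) by (simp add: \<kappa>'_def)
    hence "{y} \<subseteq> gfp (\<lambda>Y. X \<inter> sem lift X xi (\<kappa>(z y := X \<inter> Y)) (Mod (Lf y) (map (phi X z Lf xsf (insert y S)) (xsf y))))"
      by (rule gfp_upperbound)
    then show ?thesis using False 1(2,5) by (simp add: phi.simps[of X z Lf xsf S y])
  qed
qed

theorem mainTheorem12:
  fixes T :: "'u set \<Rightarrow> 't set"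
    and Tm :: "'u set \<Rightarrow> 'u set \<Rightarrow> ('u \<Rightarrow> 'u) \<Rightarrow> 't \<Rightarrow> 't"
    and ar :: "'l \<Rightarrow> nat"
    and lift :: "'l \<Rightarrow> 'u set \<Rightarrow> 'u set list \<Rightarrow> 't set"
    and X :: "'u set"
    and xi :: "'u \<Rightarrow> 't"
    and x :: 'u
  assumes "set_functor T Tm"
    and "\<And>L. pred_lifting T Tm (ar L) (lift L)"
    and "\<And>L. monotone_lifting (ar L) (lift L)"
    and "\<And>L. singleton_preserving (ar L) (lift L)"
    and "strongly_expressive T ar lift"
    and "infinite (UNIV :: 'v set)"
    and "finite X"
    and "\<forall>y\<in>X. xi y \<in> T X"
    and "x \<in> X"
  shows "\<exists>\<phi> :: ('l, 'v) expr. well_arity ar \<phi> \<and> closed \<phi> \<and> guarded \<phi> \<and>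
           x \<in> sem lift X xi (\<lambda>_. {}) \<phi>"
proof -
  have "\<forall>y\<in>X. \<exists>p. length (snd p) = ar (fst p) \<and> set (snd p) \<subseteq> X \<and> {xi y} = lift (fst p) X (map (\<lambda>x. {x}) (snd p))"
    using assms(5,8) unfolding strongly_expressive_def by fastforce
  then obtain f where f: "\<forall>y\<in>X. length (snd (f y)) = ar (fst (f y)) \<and> set (snd (f y)) \<subseteq> X \<and> {xi y} = lift (fst (f y)) X (map (\<lambda>x. {x}) (snd (f y)))"
    by metis
  obtain g :: "nat \<Rightarrow> 'v" where g: "inj g" using infinite_countable_subset[OF assms(6)] by blast
  obtain h :: "'u \<Rightarrow> nat" where h: "inj_on h X" using finite_imp_inj_to_nat_seg[OF assms(7)] by blast
  define z where "z = g \<circ> h"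
  have zi: "inj_on z X" unfolding z_def using g h by (simp add: comp_inj_on inj_on_subset)
  define \<phi> :: "('l, 'v) expr" where "\<phi> = phi X z (fst \<circ> f) (snd \<circ> f) {} x"
  have syn: "well_arity ar \<phi> \<and> fv \<phi> \<subseteq> z ` {} \<and> unguarded_fv \<phi> \<subseteq> z ` {} \<and> guarded \<phi>"
    unfolding \<phi>_def by (rule phi_syn[OF assms(7) _ assms(9)]) (use f in simp)
  have "x \<in> sem lift X xi (\<lambda>_. {}) \<phi>"
    unfolding \<phi>_def
  proof (rule phi_sem[OF assms(7) zi _ assms(9)])
    show "\<forall>y\<in>X. set ((snd \<circ> f) y) \<subseteq> X \<and> length ((snd \<circ> f) y) = ar ((fst \<circ> f) y) \<and> monotone_lifting (ar ((fst \<circ> f) y)) (lift ((fst \<circ> f) y))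
                 \<and> {xi y} = lift ((fst \<circ> f) y) X (map (\<lambda>x. {x}) ((snd \<circ> f) y))"
      unfolding comp_def using f assms(3) by blast
  qed auto
  then show ?thesis using syn unfolding closed_def by auto
qed

end
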